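(* Let $(\Omega,\mathcal{F},\mathbb{P})$ be a nonatomic probability space, let $\gamma>0$, let $u(x)=1-e^{-\gamma x}$ for $x\in\mathbb{R}$, let $\alpha<1$, and set $\mathcal{A}_u^\infty=\{X\in L^\infty:\mathbb{E}[u(X)]\ge\alpha\}$. Let $S=(S_0,S_T)$ be a traded asset with $S_T\in L^\infty$ and assume $\rho_{\mathcal{A}_u^\infty,S}$ is finite-valued on $L^\infty$. Then $\mathrm{Index}_{\mathrm{fin}}(\rho_{\mathcal{A}_u^\infty,S})=\infty$.
   Context: A traded asset is $S=(S_0,S_T)$ with $S_0>0$, $S_T\ge0$ a.s., $S_T\ne0$. For $\mathcal{B}\subset L^\infty$, $\rho_{\mathcal{B},S}(X)=\inf\{m\in\mathbb{R}:X+\frac{m}{S_0}S_T\in\mathcal{B}\}$. For a convex, law-invariant acceptance set $\mathcal{A}\subset L^\infty$ with $\rho_{\mathcal{A},S}$ finite-valued on $L^\infty$, $\mathrm{Index}_{\mathrm{fin}}(\rho_{\mathcal{A},S})=\inf\{p\in[1,\infty):\text{the closure of }\mathcal{A}\text{ in }L^p\text{ has nonempty interior in }L^p\}$, with $\inf\emptyset=\infty$. *)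

theory Defs
  imports "HOL-Probability.Probability"
begin

text \<open>Random variables are real functions on the sample space of the measure M;
  L-spaces are handled via representatives (all notions below are invariant
  under almost-everywhere equality).\<close>

definition nonatomic :: "'a measure \<Rightarrow> bool" where
  "nonatomic M \<longleftrightarrow> (\<forall>A\<in>sets M. measure M A > 0 \<longrightarrow>
      (\<exists>B\<in>sets M. B \<subseteq> A \<and> 0 < measure M B \<and> measure M B < measure M A))"

definition Linf :: "'a measure \<Rightarrow> ('a \<Rightarrow> real) set" where
  "Linf M = {X. X \<in> borel_measurable M \<and> (\<exists>C. AE x in M. \<bar>X x\<bar> \<le> C)}"

definition Lp :: "'a measure \<Rightarrow> real \<Rightarrow> ('a \<Rightarrow> real) set" where
  "Lp M p = {X. X \<in> borel_measurable M \<and> integrable M (\<lambda>x. \<bar>X x\<bar> powr p)}"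

definition Lp_dist :: "'a measure \<Rightarrow> real \<Rightarrow> ('a \<Rightarrow> real) \<Rightarrow> ('a \<Rightarrow> real) \<Rightarrow> real" where
  "Lp_dist M p X Y = (\<integral>x. \<bar>X x - Y x\<bar> powr p \<partial>M) powr (1 / p)"

definition Lp_closure :: "'a measure \<Rightarrow> real \<Rightarrow> ('a \<Rightarrow> real) set \<Rightarrow> ('a \<Rightarrow> real) set" where
  "Lp_closure M p B = {X \<in> Lp M p. \<forall>e>0. \<exists>Y\<in>B. Lp_dist M p X Y < e}"

definition Lp_nonempty_interior :: "'a measure \<Rightarrow> real \<Rightarrow> ('a \<Rightarrow> real) set \<Rightarrow> bool" where
  "Lp_nonempty_interior M p C \<longleftrightarrow>
     (\<exists>X\<in>Lp M p. \<exists>e>0. \<forall>Y\<in>Lp M p. Lp_dist M p X Y < e \<longrightarrow> Y \<in> C)"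

text \<open>Index_fin, with inf of the empty set equal to infinity.\<close>
definition index_fin :: "'a measure \<Rightarrow> ('a \<Rightarrow> real) set \<Rightarrow> ereal" where
  "index_fin M A = Inf (ereal ` {p. 1 \<le> p \<and> Lp_nonempty_interior M p (Lp_closure M p A)})"

definition traded_asset :: "'a measure \<Rightarrow> real \<Rightarrow> ('a \<Rightarrow> real) \<Rightarrow> bool" where
  "traded_asset M S0 ST \<longleftrightarrow> S0 > 0 \<and> ST \<in> borel_measurable M \<and>
     (AE x in M. ST x \<ge> 0) \<and> \<not> (AE x in M. ST x = 0)"

definition rho :: "('a \<Rightarrow> real) set \<Rightarrow> real \<Rightarrow> ('a \<Rightarrow> real) \<Rightarrow> ('a \<Rightarrow> real) \<Rightarrow> real" where
  "rho B S0 ST X = Inf {m. (\<lambda>w. X w + m / S0 * ST w) \<in> B}"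

definition rho_finite :: "'a measure \<Rightarrow> ('a \<Rightarrow> real) set \<Rightarrow> real \<Rightarrow> ('a \<Rightarrow> real) \<Rightarrow> bool" where
  "rho_finite M B S0 ST \<longleftrightarrow> (\<forall>X\<in>Linf M.
     {m. (\<lambda>w. X w + m / S0 * ST w) \<in> B} \<noteq> {} \<and> bdd_below {m. (\<lambda>w. X w + m / S0 * ST w) \<in> B})"

definition exp_util_accept :: "'a measure \<Rightarrow> real \<Rightarrow> real \<Rightarrow> ('a \<Rightarrow> real) set" where
  "exp_util_accept M \<gamma> \<alpha> = {X \<in> Linf M. (\<integral>x. 1 - exp (- \<gamma> * X x) \<partial>M) \<ge> \<alpha>}"

end

theory Submission
  imports Defs
begin

lemma powr_diff_bound:
  fixes a b p :: real assumes "p > 0"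
  shows "\<bar>a - b\<bar> powr p \<le> 2 powr p * (\<bar>a\<bar> powr p + \<bar>b\<bar> powr p)"
proof -
  have "\<bar>a - b\<bar> \<le> 2 * max \<bar>a\<bar> \<bar>b\<bar>" by auto
  hence "\<bar>a - b\<bar> powr p \<le> (2 * max \<bar>a\<bar> \<bar>b\<bar>) powr p"
    by (intro powr_mono2) (use assms in auto)
  also have "\<dots> = 2 powr p * max \<bar>a\<bar> \<bar>b\<bar> powr p"
    by (simp add: powr_mult)
  also have "max \<bar>a\<bar> \<bar>b\<bar> powr p \<le> \<bar>a\<bar> powr p + \<bar>b\<bar> powr p"
    by (cases "\<bar>a\<bar> \<le> \<bar>b\<bar>") (auto simp: max_def)
  hence "2 powr p * max \<bar>a\<bar> \<bar>b\<bar> powr p \<le> 2 powr p * (\<bar>a\<bar> powr p + \<bar>b\<bar> powr p)"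
    by (intro mult_left_mono) auto
  finally show ?thesis .
qed

lemma Lp_diff:
  assumes "p > 0" "X \<in> Lp M p" "Y \<in> Lp M p"
  shows "integrable M (\<lambda>x. \<bar>X x - Y x\<bar> powr p)"
proof -
  have [measurable]: "X \<in> borel_measurable M" "Y \<in> borel_measurable M"
    using assms by (auto simp: Lp_def)
  have "integrable M (\<lambda>x. 2 powr p * (\<bar>X x\<bar> powr p + \<bar>Y x\<bar> powr p))"
    using assms by (auto simp: Lp_def)
  then show ?thesis
  proof (rule Bochner_Integration.integrable_bound)
    show "(\<lambda>x. \<bar>X x - Y x\<bar> powr p) \<in> borel_measurable M" by measurable
    show "AE x in M. norm (\<bar>X x - Y x\<bar> powr p) \<le> norm (2 powr p * (\<bar>X x\<bar> powr p + \<bar>Y x\<bar> powr p))"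
      using powr_diff_bound[OF assms(1)] by (auto intro!: AE_I2)
  qed
qed

lemma Linf_Lp:
  assumes "prob_space M" "p > 0" "X \<in> Linf M"
  shows "X \<in> Lp M p"
proof -
  interpret prob_space M by fact
  obtain C where X[measurable]: "X \<in> borel_measurable M" and C: "AE x in M. \<bar>X x\<bar> \<le> C"
    using assms by (auto simp: Linf_def)
  have "integrable M (\<lambda>x. \<bar>C\<bar> powr p)" by simp
  then have "integrable M (\<lambda>x. \<bar>X x\<bar> powr p)"
  proof (rule Bochner_Integration.integrable_bound)
    show "(\<lambda>x. \<bar>X x\<bar> powr p) \<in> borel_measurable M" by measurable
    show "AE x in M. norm (\<bar>X x\<bar> powr p) \<le> norm (\<bar>C\<bar> powr p)"
      using C by eventually_elim (use assms in \<open>auto intro!: powr_mono2\<close>)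
  qed
  then show ?thesis using X by (auto simp: Lp_def)
qed

lemma small_set:
  assumes "prob_space M" "nonatomic M" "D \<in> sets M" "measure M D > 0" "\<delta> > 0"
  shows "\<exists>B\<in>sets M. B \<subseteq> D \<and> 0 < measure M B \<and> measure M B < \<delta>"
proof -
  interpret prob_space M by fact
  have step: "\<exists>B\<in>sets M. B \<subseteq> D \<and> 0 < measure M B \<and> measure M B \<le> measure M D / 2 ^ n" for n
  proof (induction n)
    case 0 then show ?case using assms by auto
  next
    case (Suc n)
    then obtain B where B: "B \<in> sets M" "B \<subseteq> D" "0 < measure M B" "measure M B \<le> measure M D / 2 ^ n"
      by auto
    then obtain B' where B': "B' \<in> sets M" "B' \<subseteq> B" "0 < measure M B'" "measure M B' < measure M B"
      using assms(2) unfolding nonatomic_def by blast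
    have d: "measure M (B - B') = measure M B - measure M B'"
      using B B' by (simp add: finite_measure_Diff)
    have eq: "measure M D / 2 ^ Suc n = (measure M D / 2 ^ n) / 2" by simp
    show ?case
    proof (cases "measure M B' \<le> measure M B / 2")
      case True
      have "measure M B / 2 \<le> measure M D / 2 ^ n / 2" using B(4) by (simp add: divide_right_mono)
      then have "measure M B' \<le> measure M D / 2 ^ Suc n" unfolding eq using True by linarith
      then show ?thesis using B B' by (intro bexI[of _ B']) auto
    next
      case False
      have "measure M B / 2 \<le> measure M D / 2 ^ n / 2" using B(4) by (simp add: divide_right_mono)
      then have "measure M (B - B') \<le> measure M D / 2 ^ Suc n" unfolding eq d using False by linarith
      moreover have "0 < measure M (B - B')" unfolding d using B'(4) by linarith
      moreover have "B - B' \<subseteq> D" using B by auto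
      ultimately show ?thesis using B B' by (intro bexI[of _ "B - B'"]) auto
    qed
  qed
  obtain n where n: "measure M D / 2 ^ n < \<delta>"
  proof -
    obtain n where "measure M D / \<delta> < 2 ^ n"
      using real_arch_pow[of 2 "measure M D / \<delta>"] by auto
    then have "measure M D < 2 ^ n * \<delta>" using assms by (simp add: pos_divide_less_eq)
    then have "measure M D / 2 ^ n < \<delta>" by (simp add: pos_divide_less_eq mult.commute)
    then show ?thesis by (rule that)
  qed
  have "\<forall>B\<in>sets M. B \<subseteq> D \<and> 0 < measure M B \<and> measure M B \<le> measure M D / 2 ^ n
      \<longrightarrow> B \<subseteq> D \<and> 0 < measure M B \<and> measure M B < \<delta>"
    using n by auto
  then show ?thesis using step[of n] by blast
qed

lemma exp_lim:
  fixes a p L :: real assumes a: "a > 0" and p: "p \<ge> 1"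
  shows "\<exists>\<delta>>0. \<forall>q. 0 < q \<and> q < \<delta> \<longrightarrow> L < q * exp (a / q powr (1/p))"
proof -
  define N :: nat where "N = nat \<lceil>p\<rceil> + 1"
  have N: "real N \<ge> p + 1" unfolding N_def using p by linarith
  have Npos: "real N > 0" using N p by linarith
  define K where "K = (a / N) ^ N"
  have K: "K > 0" unfolding K_def using a Npos by simp
  define d where "d = min 1 (K / (\<bar>L\<bar> + 1))"
  have d: "d > 0" "d \<le> 1" "d \<le> K / (\<bar>L\<bar> + 1)" using K by (auto simp: d_def)
  show ?thesis
  proof (intro exI[of _ "d powr p"] conjI allI impI)
    show "d powr p > 0" using d by simp
    fix q assume q: "0 < q \<and> q < d powr p"
    define t where "t = q powr (1/p)"
    have t: "t > 0" using q by (simp add: t_def)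
    have qt: "q = t powr p" using q p by (simp add: t_def powr_powr)
    have "t < (d powr p) powr (1/p)" unfolding t_def using q p by (intro powr_less_mono2) auto
    hence td: "t < d" using d p by (simp add: powr_powr)
    have "exp (a / t) = exp (a / (N * t)) ^ N"
      using Npos by (simp add: exp_of_nat_mult[symmetric])
    also have "\<dots> \<ge> (a / (N * t)) ^ N"
      using a t Npos by (intro power_mono) (auto intro: order_trans[OF _ exp_ge_add_one_self])
    finally have e1: "exp (a / t) \<ge> (a / (N * t)) ^ N" .
    have "(a / (N * t)) ^ N = K * t powr (- real N)"
      using t by (simp add: K_def power_divide power_mult_distrib powr_minus divide_simps powr_realpow)
    with e1 have e2: "q * exp (a / t) \<ge> K * (t powr p * t powr (- real N))"
      using q qt by (metis mult.left_commute mult_left_mono less_eq_real_def)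
    have "t powr p * t powr (- real N) = t powr (p - N)" by (simp add: powr_add[symmetric])
    also have "\<dots> \<ge> t powr (-1)"
      using td d N t by (intro powr_mono') auto
    finally have "q * exp (a / t) \<ge> K * t powr (-1)"
      using e2 K by (meson mult_left_mono order_trans less_imp_le)
    moreover have "K * t powr (-1) = K / t" using t by (simp add: powr_minus divide_simps)
    moreover have "K / t > \<bar>L\<bar>"
    proof -
      have "t * (\<bar>L\<bar> + 1) < K" using td d
        by (smt (verit) K abs_ge_zero divide_le_eq mult_strict_right_mono pos_less_divide_eq)
      then have "\<bar>L\<bar> + 1 < K / t" using t by (simp add: field_simps)
      then show ?thesis by simp
    qed
    ultimately show "L < q * exp (a / q powr (1/p))" unfolding t_def[symmetric] by auto
  qed
qed

lemma no_interior:
  assumes P: "prob_space M" and NA: "nonatomic M" and g: "\<gamma> > 0" and al: "\<alpha> < 1" and p: "p \<ge> 1"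
  shows "\<not> Lp_nonempty_interior M p (Lp_closure M p (exp_util_accept M \<gamma> \<alpha>))"
proof
  interpret prob_space M by fact
  define A where "A = exp_util_accept M \<gamma> \<alpha>"
  define Kc where "Kc = 1 - \<alpha>"
  have Kc: "Kc > 0" using al by (simp add: Kc_def)
  assume "Lp_nonempty_interior M p (Lp_closure M p (exp_util_accept M \<gamma> \<alpha>))"
  then obtain X0 e where X0: "X0 \<in> Lp M p" and e: "e > 0"
    and H: "\<And>Y. Y \<in> Lp M p \<Longrightarrow> Lp_dist M p X0 Y < e \<Longrightarrow> Y \<in> Lp_closure M p A"
    unfolding Lp_nonempty_interior_def A_def by blast
  have [measurable]: "X0 \<in> borel_measurable M" using X0 by (simp add: Lp_def)
  obtain R where R: "measure M {x\<in>space M. X0 x \<le> R} > 0"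
  proof (rule ccontr)
    assume "\<not> thesis"
    then have z: "measure M {x\<in>space M. X0 x \<le> real n} = 0" for n
      using that measure_nonneg[of M] by (metis less_eq_real_def)
    have "AE x in M. \<not> X0 x \<le> real n" for n
      by (rule AE_iff_measurable[THEN iffD2, OF _ refl]) (use z in \<open>auto simp: emeasure_eq_measure\<close>)
    then have "AE x in M. \<forall>n. \<not> X0 x \<le> real n" by (simp add: AE_all_countable)
    then have "AE x in M. False"
      by eventually_elim (use real_nat_ceiling_ge in blast)
    then show False by simp
  qed
  define D where "D = {x\<in>space M. X0 x \<le> R}"
  have D: "D \<in> sets M" unfolding D_def by measurable
  define a where "a = \<gamma> * e / 4"
  have a: "a > 0" using g e by (simp add: a_def)
  obtain \<delta> where \<delta>: "\<delta> > 0" and \<delta>L: "\<And>q. 0 < q \<Longrightarrow> q < \<delta> \<Longrightarrow>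
      2 * Kc * exp (\<gamma> * R) < q * exp (a / q powr (1/p))"
    using exp_lim[OF a p, of "2 * Kc * exp (\<gamma> * R)"] by blast
  obtain B where B: "B \<in> sets M" "B \<subseteq> D" "0 < measure M B" "measure M B < \<delta>"
    using small_set[OF P NA D _ \<delta>] R by (auto simp: D_def)
  define q where "q = measure M B"
  have q: "0 < q" "q < \<delta>" using B by (auto simp: q_def)
  define t where "t = q powr (1/p)"
  have t: "t > 0" using q by (simp add: t_def)
  define c where "c = e / (2 * t)"
  have c: "c > 0" using e t by (simp add: c_def)
  define Z where "Z = (\<lambda>x. c * indicator B x :: real)"
  have [measurable]: "Z \<in> borel_measurable M" unfolding Z_def using B(1) by measurable
  have Zb: "AE x in M. \<bar>Z x\<bar> \<le> c" using c by (intro AE_I2) (simp add: Z_def indicator_def)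
  have Zm: "Z \<in> borel_measurable M" by measurable
  have "Z \<in> Linf M" unfolding Linf_def using Zb Zm by blast
  then have ZL: "Z \<in> Lp M p" using Linf_Lp[OF P] p by auto
  define Y where "Y = (\<lambda>x. X0 x - Z x)"
  have [measurable]: "Y \<in> borel_measurable M" by (simp add: Y_def)
  have YL: "Y \<in> Lp M p"
  proof -
    have "integrable M (\<lambda>x. \<bar>X0 x - Z x\<bar> powr p)" using Lp_diff[OF _ X0 ZL] p by simp
    then have "integrable M (\<lambda>x. \<bar>Y x\<bar> powr p)" by (simp add: Y_def)
    then show ?thesis by (simp add: Lp_def)
  qed
  have ind: "\<bar>X0 x - Y x\<bar> powr p = c powr p * indicator B x" for x
    using c p by (simp add: Y_def Z_def indicator_def)
  have "Lp_dist M p X0 Y = (c powr p * q) powr (1/p)"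
    unfolding Lp_dist_def ind using B by (simp add: q_def)
  also have "\<dots> = c * t"
    using c q p by (simp add: powr_mult powr_powr t_def)
  also have "\<dots> = e / 2" using t by (simp add: c_def)
  finally have "Lp_dist M p X0 Y < e" using e by simp
  with H[OF YL] have Ycl: "Y \<in> Lp_closure M p A" by blast
  define e0 where "e0 = (c/2) * (q/2) powr (1/p)"
  have e0: "e0 > 0" using c q by (simp add: e0_def)
  obtain X where XA: "X \<in> A" and Xd: "Lp_dist M p Y X < e0"
    using Ycl e0 unfolding Lp_closure_def by blast
  from XA have XLinf: "X \<in> Linf M" and Xu: "(\<integral>x. 1 - exp (- \<gamma> * X x) \<partial>M) \<ge> \<alpha>"
    by (auto simp: A_def exp_util_accept_def)
  obtain C where [measurable]: "X \<in> borel_measurable M" and C: "AE x in M. \<bar>X x\<bar> \<le> C"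
    using XLinf by (auto simp: Linf_def)
  have intE: "integrable M (\<lambda>x. exp (- \<gamma> * X x))"
  proof (rule Bochner_Integration.integrable_bound[of _ "\<lambda>x. exp (\<gamma> * C)"])
    show "AE x in M. norm (exp (- \<gamma> * X x)) \<le> norm (exp (\<gamma> * C))"
      using C
    proof eventually_elim
      fix x assume "\<bar>X x\<bar> \<le> C"
      then have "\<gamma> * (- X x) \<le> \<gamma> * C" using g by (intro mult_left_mono) auto
      then show "norm (exp (- \<gamma> * X x)) \<le> norm (exp (\<gamma> * C))" by simp
    qed
  qed auto
  have "(\<integral>x. 1 - exp (- \<gamma> * X x) \<partial>M) = 1 - (\<integral>x. exp (- \<gamma> * X x) \<partial>M)"
    using intE by (simp add: Bochner_Integration.integral_diff prob_space)
  with Xu have EK: "(\<integral>x. exp (- \<gamma> * X x) \<partial>M) \<le> Kc" by (simp add: Kc_def)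
  define G where "G = B \<inter> {x\<in>space M. X x \<le> R - c/2}"
  have G: "G \<in> sets M" "G \<subseteq> B" using B unfolding G_def by auto
  have BG: "B - G \<in> sets M" using G B by auto
  have mBG: "measure M (B - G) = q - measure M G"
    unfolding q_def by (rule finite_measure_Diff) (use G B in auto)
  show False
  proof (cases "measure M G \<ge> q/2")
    case True
    have "(\<integral>x. exp (- \<gamma> * (R - c/2)) * indicator G x \<partial>M) \<le> (\<integral>x. exp (- \<gamma> * X x) \<partial>M)"
    proof (rule integral_mono[OF _ intE])
      show "integrable M (\<lambda>x. exp (- \<gamma> * (R - c/2)) * indicator G x)"
        using G by (intro integrable_mult_right integrable_real_indicator) (auto simp: emeasure_eq_measure)
      fix x assume "x \<in> space M"
      show "exp (- \<gamma> * (R - c/2)) * indicator G x \<le> exp (- \<gamma> * X x)"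
        using g by (auto simp: indicator_def G_def mult_left_mono)
    qed
    then have E1: "exp (- \<gamma> * (R - c/2)) * measure M G \<le> Kc" using EK G by simp
    have E2: "exp (- \<gamma> * (R - c/2)) * (q/2) \<le> exp (- \<gamma> * (R - c/2)) * measure M G"
      using True by (intro mult_left_mono) auto
    have "- \<gamma> * (R - c/2) + \<gamma> * R = a / t" using t by (simp add: a_def c_def field_simps)
    then have E3: "exp (- \<gamma> * (R - c/2)) * exp (\<gamma> * R) = exp (a / t)" by (simp add: exp_add[symmetric])
    have E4: "2 * Kc * exp (\<gamma> * R) < q * exp (a / t)" using \<delta>L[OF q] by (simp add: t_def)
    have "q * exp (a / t) = (exp (- \<gamma> * (R - c/2)) * (q/2)) * (2 * exp (\<gamma> * R))"
      unfolding E3[symmetric] by simp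
    also have "\<dots> \<le> Kc * (2 * exp (\<gamma> * R))"
    proof (rule mult_right_mono)
      show "exp (- \<gamma> * (R - c/2)) * (q/2) \<le> Kc" using E1 E2 by linarith
    qed simp
    finally show False using E4 by simp
  next
    case False
    then have mBG2: "measure M (B - G) \<ge> q/2" using mBG by simp
    have intYX: "integrable M (\<lambda>x. \<bar>Y x - X x\<bar> powr p)"
      using Lp_diff[OF _ YL Linf_Lp[OF P _ XLinf]] p by simp
    have "(\<integral>x. (c/2) powr p * indicator (B - G) x \<partial>M) \<le> (\<integral>x. \<bar>Y x - X x\<bar> powr p \<partial>M)"
    proof (rule integral_mono[OF _ intYX])
      show "integrable M (\<lambda>x. (c/2) powr p * indicator (B - G) x)"
        using BG by (intro integrable_mult_right integrable_real_indicator) (auto simp: emeasure_eq_measure)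
      fix x assume x: "x \<in> space M"
      show "(c/2) powr p * indicator (B - G) x \<le> \<bar>Y x - X x\<bar> powr p"
      proof (cases "x \<in> B - G")
        case True
        then have "X0 x \<le> R" "X x > R - c/2" "x \<in> B" using B x by (auto simp: D_def G_def)
        moreover have "Y x = X0 x - c" using \<open>x \<in> B\<close> by (simp add: Y_def Z_def)
        ultimately have "Y x - X x \<le> - (c/2)" by linarith
        then have "c/2 \<le> \<bar>Y x - X x\<bar>" using abs_ge_minus_self[of "Y x - X x"] by linarith
        then have "(c/2) powr p \<le> \<bar>Y x - X x\<bar> powr p" using c p by (intro powr_mono2) auto
        then show ?thesis using True by simp
      qed auto
    qed
    then have I1: "(c/2) powr p * measure M (B - G) \<le> (\<integral>x. \<bar>Y x - X x\<bar> powr p \<partial>M)"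
      using BG by simp
    have "(c/2) powr p * (q/2) \<le> (c/2) powr p * measure M (B - G)"
      using mBG2 by (intro mult_left_mono) auto
    with I1 have "(c/2) powr p * (q/2) \<le> (\<integral>x. \<bar>Y x - X x\<bar> powr p \<partial>M)" by linarith
    then have "((c/2) powr p * (q/2)) powr (1/p) \<le> Lp_dist M p Y X"
      unfolding Lp_dist_def using p c q by (intro powr_mono2) auto
    also have "((c/2) powr p * (q/2)) powr (1/p) = ((c/2) powr p) powr (1/p) * (q/2) powr (1/p)"
      by (rule powr_mult)
    also have "((c/2) powr p) powr (1/p) = c/2"
      using c p by (simp add: powr_powr)
    also have "c/2 * (q/2) powr (1/p) = e0" by (simp add: e0_def)
    finally show False using Xd by simp
  qed
qed

theorem corollary6p7:
  fixes M :: "'a measure" and \<gamma> \<alpha> S0 :: real and ST :: "'a \<Rightarrow> real"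
  assumes "prob_space M" and "nonatomic M"
    and "\<gamma> > 0" and "\<alpha> < 1"
    and "traded_asset M S0 ST" and "ST \<in> Linf M"
    and "rho_finite M (exp_util_accept M \<gamma> \<alpha>) S0 ST"
  shows "index_fin M (exp_util_accept M \<gamma> \<alpha>) = \<infinity>"
proof -
  have E: "{p. 1 \<le> p \<and> Lp_nonempty_interior M p (Lp_closure M p (exp_util_accept M \<gamma> \<alpha>))} = {}"
    using no_interior[OF assms(1-4)] by blast
  show ?thesis unfolding index_fin_def E by (simp add: top_ereal_def)
qed

end
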